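(* For all $\mu\in\mathcal{P}(\overline{\mathbb{Z}})$, $$\lim_{\varepsilon\to0^+}\limsup_{n\to\infty}\frac1n\log\mathbb{P}_0\big(\ell_n\in B(\mu,\varepsilon)\big)\le-I(\mu).$$
   Context: $\overline{\mathbb{Z}}=\mathbb{Z}\cup\{-\infty,+\infty\}$ is the two-point compactification of $\mathbb{Z}$. Let $p:\mathbb{Z}\to[0,1]$ with $0<p(k)<1$ for all $k$ and limits $p_\pm=\lim_{k\to\pm\infty}p(k)\in(0,1)$. Under $\mathbb{P}_0$, $(S_n)_{n\ge1}$ is the Markov chain on $\overline{\mathbb{Z}}$ with $S_1=0$, $\pm\infty$ absorbing, $k\to k+1$ w.p. $p(k)$ and $k\to k-1$ w.p. $1-p(k)$ for $k\in\mathbb{Z}$; $\ell_n=\frac1n\sum_{j=1}^n\delta_{S_j}$. Metric on $\overline{\mathbb{Z}}$: $d(h,k)=|\varphi(h)-\varphi(k)|$, $\varphi(\pm\infty)=\pm1$, $\varphi(k)=1-2^{-k}$ ($k\ge0$), $\varphi(k)=-1+2^{-|k|}$ ($k<0$); $\|\nu\|=\sup\{\int f\,d\nu: f\text{ 1-Lipschitz for }d,\ \sup|f|\le1\}$; $B(\mu,\varepsilon)=\{\nu\in\mathcal{P}(\overline{\mathbb{Z}}):\|\nu-\mu\|<\varepsilon\}$. For $\mu=\alpha_-\delta_{-\infty}+\alpha_0\mu_0+\alpha_+\delta_{+\infty}$ ($\alpha_\sigma\ge0$ summing to 1, $\mu_0\in\mathcal{P}(\mathbb{Z})$, arbitrary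 if $\alpha_0=0$), with $0\cdot\infty=0$: $I(\mu)=\alpha_0 I_{\mathrm{DV}}(\mu_0)+\min\{\alpha_- I^{p_-}_{\mathrm{Cr}}(0)+\alpha_+\inf_{x\in[0,1]}I^{p_+}_{\mathrm{Cr}}(x)\,;\,\alpha_+ I^{p_+}_{\mathrm{Cr}}(0)+\alpha_-\inf_{x\in[-1,0]}I^{p_-}_{\mathrm{Cr}}(x)\}$, where $I_{\mathrm{DV}}(\nu)=\sup_{u_k\ge1}\sum_{k}\nu(k)\log\frac{u_k}{p(k)u_{k+1}+(1-p(k))u_{k-1}}$ and $I^q_{\mathrm{Cr}}(x)=\frac{1-x}{2}\log\frac{1-x}{2(1-q)}+\frac{1+x}{2}\log\frac{1+x}{2q}$ on $[-1,1]$, $+\infty$ elsewhere. *)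

theory Defs
  imports "HOL-Probability.Probability"
begin

datatype zbar = NegInf | Fin int | PosInf

fun phi :: "zbar \<Rightarrow> real" where
  "phi NegInf = -1"
| "phi PosInf = 1"
| "phi (Fin k) = (if 0 \<le> k then 1 - (1/2) ^ nat k else -1 + (1/2) ^ nat (- k))"

definition zdist :: "zbar \<Rightarrow> zbar \<Rightarrow> real" where
  "zdist h k = \<bar>phi h - phi k\<bar>"

definition BL_norm_diff :: "zbar pmf \<Rightarrow> zbar pmf \<Rightarrow> real" where
  "BL_norm_diff nu mu =
     (SUP f \<in> {f :: zbar \<Rightarrow> real. (\<forall>h k. \<bar>f h - f k\<bar> \<le> zdist h k) \<and> (\<forall>x. \<bar>f x\<bar> \<le> 1)}.
        measure_pmf.expectation nu f - measure_pmf.expectation mu f)"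

definition BLball :: "zbar pmf \<Rightarrow> real \<Rightarrow> zbar pmf set" where
  "BLball mu \<epsilon> = {nu. BL_norm_diff nu mu < \<epsilon>}"

fun step :: "(int \<Rightarrow> real) \<Rightarrow> zbar \<Rightarrow> zbar pmf" where
  "step p (Fin k) = map_pmf (\<lambda>b. if b then Fin (k + 1) else Fin (k - 1)) (bernoulli_pmf (p k))"
| "step p NegInf = return_pmf NegInf"
| "step p PosInf = return_pmf PosInf"

text \<open>walk p x m: law of the path [S_1, ..., S_(m+1)] of the chain started at S_1 = x.\<close>
fun walk :: "(int \<Rightarrow> real) \<Rightarrow> zbar \<Rightarrow> nat \<Rightarrow> zbar list pmf" where
  "walk p x 0 = return_pmf [x]"
| "walk p x (Suc m) = bind_pmf (step p x) (\<lambda>y. map_pmf (Cons x) (walk p y m))"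

definition empirical :: "zbar list \<Rightarrow> zbar pmf" where
  "empirical xs = pmf_of_multiset (mset xs)"

definition prob_ball :: "(int \<Rightarrow> real) \<Rightarrow> nat \<Rightarrow> zbar pmf \<Rightarrow> real \<Rightarrow> real" where
  "prob_ball p n mu \<epsilon> =
     measure_pmf.prob (walk p (Fin 0) (n - 1)) {xs. empirical xs \<in> BLball mu \<epsilon>}"

definition eln :: "real \<Rightarrow> ereal" where
  "eln x = (if x \<le> 0 then - \<infinity> else ereal (ln x))"

text \<open>Cramer rate function of a \<plusminus>1 Bernoulli step with P(+1) = q (0 log 0 = 0).\<close>
definition ICr :: "real \<Rightarrow> real \<Rightarrow> ereal" where
  "ICr q x = (if -1 \<le> x \<and> x \<le> 1 then
      ereal ((1 - x) / 2 * ln ((1 - x) / (2 * (1 - q))) + (1 + x) / 2 * ln ((1 + x) / (2 * q)))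
    else \<infinity>)"

definition IDV :: "(int \<Rightarrow> real) \<Rightarrow> (int \<Rightarrow> real) \<Rightarrow> ereal" where
  "IDV p nu = (SUP u \<in> {u :: int \<Rightarrow> real. (\<forall>k. 1 \<le> u k) \<and>
        (\<lambda>k. nu k * ln (u k / (p k * u (k + 1) + (1 - p k) * u (k - 1)))) summable_on UNIV}.
      ereal (\<Sum>\<^sub>\<infinity>k. nu k * ln (u k / (p k * u (k + 1) + (1 - p k) * u (k - 1)))))"

text \<open>The rate function I, via the decomposition
  mu = alpha_- delta_(-\<infinity>) + alpha_0 mu_0 + alpha_+ delta_(+\<infinity>) (0 * \<infinity> = 0 in ereal).\<close>
definition Irate :: "(int \<Rightarrow> real) \<Rightarrow> real \<Rightarrow> real \<Rightarrow> zbar pmf \<Rightarrow> ereal" where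
  "Irate p pm pp mu =
    (let am = pmf mu NegInf; ap = pmf mu PosInf; a0 = 1 - am - ap;
         mu0 = (\<lambda>k. pmf mu (Fin k) / a0)
     in ereal a0 * IDV p mu0
        + min (ereal am * ICr pm 0 + ereal ap * (INF x \<in> {0..1}. ICr pp x))
              (ereal ap * ICr pp 0 + ereal am * (INF x \<in> {-1..0}. ICr pm x)))"

end

theory Submission
  imports Defs
begin
definition Vf :: "(int \<Rightarrow> real) \<Rightarrow> (int \<Rightarrow> real) \<Rightarrow> int \<Rightarrow> real" where
  "Vf p U k = ln (U k / (p k * U (k+1) + (1 - p k) * U (k-1)))"

fun Uz :: "(int \<Rightarrow> real) \<Rightarrow> zbar \<Rightarrow> real" where
  "Uz U (Fin k) = U k" | "Uz U NegInf = 1" | "Uz U PosInf = 1"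

fun Vz :: "(int \<Rightarrow> real) \<Rightarrow> (int \<Rightarrow> real) \<Rightarrow> zbar \<Rightarrow> real" where
  "Vz p U (Fin k) = Vf p U k" | "Vz p U NegInf = 0" | "Vz p U PosInf = 0"

definition Gw :: "(int \<Rightarrow> real) \<Rightarrow> (int \<Rightarrow> real) \<Rightarrow> zbar list \<Rightarrow> real" where
  "Gw p U xs = exp (sum_list (map (Vz p U) (butlast xs))) * Uz U (last xs)"

lemma walk_set: "xs \<in> set_pmf (walk p x m) \<Longrightarrow> length xs = Suc m \<and> hd xs = x"
  by (induction m arbitrary: x xs) auto

lemma step_fin: "z \<in> set_pmf (step p (Fin k)) \<Longrightarrow> \<exists>j. z = Fin j"
  by auto

lemma walk_fin: "xs \<in> set_pmf (walk p (Fin k) m) \<Longrightarrow> \<forall>y\<in>set xs. \<exists>j. y = Fin j"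
proof (induction m arbitrary: k xs)
  case 0
  then show ?case by simp
next
  case (Suc m)
  from Suc.prems obtain z ys where z: "z \<in> set_pmf (step p (Fin k))" and ys: "ys \<in> set_pmf (walk p z m)"
    and xs: "xs = Fin k # ys"
    by (simp only: walk.simps set_bind_pmf set_map_pmf) blast
  from step_fin[OF z] obtain j where "z = Fin j" by blast
  with Suc.IH ys xs show ?case by auto
qed

lemma Uz_pos: "(\<And>k. 0 < U k) \<Longrightarrow> 0 < Uz U x"
  by (cases x) auto

lemma walk_mart:
  assumes p: "\<And>k. 0 < p k \<and> p k < 1" and U: "\<And>k. 0 < U k"
  shows "(\<integral>\<^sup>+ xs. ennreal (Gw p U xs) \<partial>walk p x m) = ennreal (Uz U x)"
proof (induction m arbitrary: x)
  case 0
  then show ?case by (simp add: Gw_def)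
next
  case (Suc m)
  have inner: "(\<integral>\<^sup>+ ys. ennreal (Gw p U (x # ys)) \<partial>walk p y m) = ennreal (exp (Vz p U x) * Uz U y)" for y
  proof -
    have "(\<integral>\<^sup>+ ys. ennreal (Gw p U (x # ys)) \<partial>walk p y m) = (\<integral>\<^sup>+ ys. ennreal (exp (Vz p U x)) * ennreal (Gw p U ys) \<partial>walk p y m)"
    proof (intro nn_integral_cong_AE, unfold AE_measure_pmf_iff, intro ballI)
      fix ys assume "ys \<in> set_pmf (walk p y m)"
      then have "ys \<noteq> []" using walk_set[of ys p y m] by auto
      then show "ennreal (Gw p U (x # ys)) = ennreal (exp (Vz p U x)) * ennreal (Gw p U ys)"
        by (simp add: Gw_def exp_add ennreal_mult' mult.assoc)
    qed
    also have "\<dots> = ennreal (exp (Vz p U x)) * ennreal (Uz U y)"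
      by (simp add: nn_integral_cmult Suc)
    finally show ?thesis by (simp add: ennreal_mult')
  qed
  show ?case
  proof (cases x)
    case (Fin k)
    have pk: "0 < p k" "p k < 1" using p[of k] by auto
    have den: "0 < p k * U (k+1) + (1 - p k) * U (k-1)"
      using pk U[of "k+1"] U[of "k-1"] by (simp add: add_pos_pos)
    have "(\<integral>\<^sup>+ xs. ennreal (Gw p U xs) \<partial>walk p x (Suc m))
        = ennreal (exp (Vf p U k) * U (k+1)) * ennreal (p k) + ennreal (exp (Vf p U k) * U (k-1)) * ennreal (1 - p k)"
      using pk by (simp add: Fin inner[unfolded Fin])
    also have "\<dots> = ennreal (exp (Vf p U k) * (p k * U (k+1) + (1 - p k) * U (k-1)))"
      using pk U[of "k+1"] U[of "k-1"]
      by (simp add: ennreal_mult''[symmetric] ennreal_plus[symmetric] algebra_simps del: ennreal_plus)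
    also have "exp (Vf p U k) * (p k * U (k+1) + (1 - p k) * U (k-1)) = U k"
      using den U[of k] by (simp add: Vf_def)
    finally show ?thesis using Fin by simp
  next
    case NegInf
    then show ?thesis using inner[of NegInf] by simp
  next
    case PosInf
    then show ?thesis using inner[of PosInf] by simp
  qed
qed

lemma sum_list_count_real:
  "sum_list (map (f :: 'a \<Rightarrow> real) xs) = sum (\<lambda>x. real (count_list xs x) * f x) (set xs)"
proof(induction xs)
  case (Cons x xs)
  show ?case (is "?l = ?r")
  proof cases
    assume "x \<in> set xs"
    have "?l = f x + (\<Sum>x\<in>set xs. real (count_list xs x) * f x)" by (simp add: Cons.IH)
    also have "set xs = insert x (set xs - {x})" using \<open>x \<in> set xs\<close> by blast
    also have "f x + (\<Sum>x\<in>insert x (set xs - {x}). real (count_list xs x) * f x) = ?r"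
      by (simp add: sum.insert_remove eq_commute algebra_simps)
    finally show ?thesis .
  next
    assume "x \<notin> set xs"
    hence "\<And>xa. xa \<in> set xs \<Longrightarrow> x \<noteq> xa" by blast
    thus ?thesis by (simp add: Cons.IH \<open>x \<notin> set xs\<close>)
  qed
qed simp

lemma emp_expect:
  assumes "xs \<noteq> []"
  shows "measure_pmf.expectation (empirical xs) (W :: zbar \<Rightarrow> real) = sum_list (map W xs) / length xs"
proof -
  have ne: "mset xs \<noteq> {#}" using assms by simp
  have "measure_pmf.expectation (empirical xs) W = (\<Sum>a\<in>set xs. pmf (empirical xs) a *\<^sub>R W a)"
    unfolding empirical_def
    by (rule integral_measure_pmf) (use ne in auto)
  also have "\<dots> = (\<Sum>a\<in>set xs. real (count_list xs a) * W a) / length xs"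
    using ne by (simp add: empirical_def sum_divide_distrib count_mset)
  also have "(\<Sum>a\<in>set xs. real (count_list xs a) * W a) = sum_list (map W xs)"
    by (rule sum_list_count_real[symmetric])
  finally show ?thesis .
qed

lemma expect_bound:
  fixes f :: "zbar \<Rightarrow> real"
  assumes "\<And>x. \<bar>f x\<bar> \<le> B"
  shows "\<bar>measure_pmf.expectation nu f\<bar> \<le> B"
proof -
  have int: "integrable (measure_pmf nu) f"
    by (rule measure_pmf.integrable_const_bound[where B=B]) (use assms in auto)
  have "measure_pmf.expectation nu f \<le> measure_pmf.expectation nu (\<lambda>x. B)"
    by (rule integral_mono) (use int assms abs_le_D1 in auto)
  moreover have "measure_pmf.expectation nu (\<lambda>x. - B) \<le> measure_pmf.expectation nu f"
  proof (rule integral_mono)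
    show "integrable (measure_pmf nu) (\<lambda>x. - B)" by simp
    show "integrable (measure_pmf nu) f" by (rule int)
    show "- B \<le> f x" for x using assms[of x] by linarith
  qed
  ultimately show ?thesis by simp
qed

lemma BL_lower:
  assumes nu: "nu \<in> BLball mu e" and C: "0 < C" and Wb: "\<And>x. \<bar>W x\<bar> \<le> C"
    and WL: "\<And>h k. \<bar>W h - W k\<bar> \<le> C * zdist h k"
  shows "measure_pmf.expectation mu W - C * e \<le> measure_pmf.expectation nu W"
proof -
  let ?S = "{f :: zbar \<Rightarrow> real. (\<forall>h k. \<bar>f h - f k\<bar> \<le> zdist h k) \<and> (\<forall>x. \<bar>f x\<bar> \<le> 1)}"
  let ?F = "\<lambda>f. measure_pmf.expectation nu f - measure_pmf.expectation mu f"
  define f where "f = (\<lambda>x. - W x / C)"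
  have fS: "f \<in> ?S"
  proof -
    have "\<bar>f h - f k\<bar> \<le> zdist h k" for h k
    proof -
      have "\<bar>f h - f k\<bar> = \<bar>W h - W k\<bar> / C" using C by (simp add: f_def field_simps abs_divide)
      also have "\<dots> \<le> zdist h k" using WL[of h k] C by (simp add: divide_le_eq mult.commute)
      finally show ?thesis .
    qed
    moreover have "\<bar>f x\<bar> \<le> 1" for x using Wb[of x] C by (simp add: f_def abs_divide divide_le_eq)
    ultimately show ?thesis by blast
  qed
  have bdd: "bdd_above (?F ` ?S)"
  proof (rule bdd_aboveI[where M=2])
    fix y assume "y \<in> ?F ` ?S"
    then obtain g where g: "g \<in> ?S" "y = ?F g" by blast
    have "\<bar>measure_pmf.expectation nu g\<bar> \<le> 1" "\<bar>measure_pmf.expectation mu g\<bar> \<le> 1"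
      using g(1) by (auto intro!: expect_bound)
    then show "y \<le> 2" using g(2) by linarith
  qed
  have "?F f \<le> BL_norm_diff nu mu"
    unfolding BL_norm_diff_def by (rule cSUP_upper[OF fS bdd])
  also have "\<dots> < e" using nu by (simp add: BLball_def)
  finally have lt: "?F f < e" .
  have "?F f = (measure_pmf.expectation mu W - measure_pmf.expectation nu W) / C"
    by (simp add: f_def diff_divide_distrib)
  with lt C show ?thesis by (simp add: divide_less_eq algebra_simps)
qed

lemma PB:
  fixes R :: "int set"
  assumes p: "\<And>k. 0 < p k \<and> p k < 1" and U: "\<And>k. 0 < U k" and UR: "\<And>k. k \<in> R \<Longrightarrow> 1 \<le> U k"
    and WV: "\<And>k. W (Fin k) \<le> Vf p U k" and C: "0 < C" and Wb: "\<And>x. \<bar>W x\<bar> \<le> C"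
    and WL: "\<And>h k. \<bar>W h - W k\<bar> \<le> C * zdist h k" and n: "1 \<le> n"
  shows "measure_pmf.prob (walk p (Fin 0) (n-1)) {xs. empirical xs \<in> BLball mu e \<and> (\<exists>k\<in>R. last xs = Fin k)}
     \<le> U 0 * (exp C * exp (- (real n * (measure_pmf.expectation mu W - C * e))))"
proof -
  let ?S = "{xs. empirical xs \<in> BLball mu e \<and> (\<exists>k\<in>R. last xs = Fin k)}"
  define c where "c = exp C * exp (- (real n * (measure_pmf.expectation mu W - C * e)))"
  let ?M = "walk p (Fin 0) (n-1)"
  have pt: "indicator ?S xs \<le> ennreal (c * Gw p U xs)" if xs: "xs \<in> set_pmf ?M" for xs
  proof (cases "xs \<in> ?S")
    case False
    then show ?thesis by simp
  next
    case True
    then obtain k where k: "k \<in> R" "last xs = Fin k" and emp: "empirical xs \<in> BLball mu e" by blast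
    have len: "length xs = n" and ne: "xs \<noteq> []" using walk_set[OF xs] n by auto
    have fin: "\<forall>y\<in>set xs. \<exists>j. y = Fin j" using walk_fin[OF xs] .
    have "measure_pmf.expectation mu W - C * e \<le> measure_pmf.expectation (empirical xs) W"
      by (rule BL_lower[OF emp C Wb WL])
    also have "\<dots> = sum_list (map W xs) / n" using emp_expect[OF ne] len by simp
    finally have s1: "real n * (measure_pmf.expectation mu W - C * e) \<le> sum_list (map W xs)"
      using n by (simp add: le_divide_eq mult.commute)
    have "sum_list (map W (butlast xs @ [last xs])) = sum_list (map W (butlast xs)) + W (last xs)"
      by simp
    then have "sum_list (map W xs) = sum_list (map W (butlast xs)) + W (last xs)"
      using append_butlast_last_id[OF ne] by simp
    also have "sum_list (map W (butlast xs)) \<le> sum_list (map (Vz p U) (butlast xs))"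
    proof (rule sum_list_mono)
      fix y assume "y \<in> set (butlast xs)"
      then have "y \<in> set xs" by (rule in_set_butlastD)
      then obtain j where "y = Fin j" using fin by blast
      then show "W y \<le> Vz p U y" using WV[of j] by simp
    qed
    also have "W (last xs) \<le> C" using Wb[of "last xs"] by simp
    finally have s2: "real n * (measure_pmf.expectation mu W - C * e) \<le> sum_list (map (Vz p U) (butlast xs)) + C"
      using s1 by linarith
    have Ul: "1 \<le> Uz U (last xs)" using k UR by simp
    have "exp (real n * (measure_pmf.expectation mu W - C * e)) \<le> exp (sum_list (map (Vz p U) (butlast xs))) * exp C"
      using s2 by (simp add: exp_add[symmetric])
    also have "\<dots> \<le> exp (sum_list (map (Vz p U) (butlast xs))) * Uz U (last xs) * exp C"
      using Ul by simp
    also have "\<dots> = Gw p U xs * exp C" by (simp add: Gw_def)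
    finally have ea: "exp (real n * (measure_pmf.expectation mu W - C * e)) \<le> Gw p U xs * exp C" .
    have "1 = exp (- (real n * (measure_pmf.expectation mu W - C * e))) * exp (real n * (measure_pmf.expectation mu W - C * e))"
      by (simp add: exp_minus_inverse mult.commute)
    also have "\<dots> \<le> exp (- (real n * (measure_pmf.expectation mu W - C * e))) * (Gw p U xs * exp C)"
      by (rule mult_left_mono[OF ea]) simp
    also have "\<dots> = c * Gw p U xs" by (simp add: c_def)
    finally have "1 \<le> c * Gw p U xs" .
    then show ?thesis using True by simp
  qed
  have "emeasure (measure_pmf ?M) ?S = (\<integral>\<^sup>+ xs. indicator ?S xs \<partial>?M)" by simp
  also have "\<dots> \<le> (\<integral>\<^sup>+ xs. ennreal c * ennreal (Gw p U xs) \<partial>?M)"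
  proof (intro nn_integral_mono_AE, unfold AE_measure_pmf_iff, intro ballI)
    fix xs assume xs: "xs \<in> set_pmf ?M"
    have "ennreal c * ennreal (Gw p U xs) = ennreal (c * Gw p U xs)"
      by (simp add: c_def ennreal_mult')
    with pt[OF xs] show "indicator ?S xs \<le> ennreal c * ennreal (Gw p U xs)" by simp
  qed
  also have "\<dots> = ennreal c * ennreal (U 0)"
    by (simp add: nn_integral_cmult walk_mart[OF p U])
  also have "\<dots> = ennreal (U 0 * c)" using U[of 0] by (simp add: ennreal_mult mult.commute c_def)
  finally have "ennreal (measure_pmf.prob ?M ?S) \<le> ennreal (U 0 * c)"
    by (simp add: measure_pmf.emeasure_eq_measure)
  then show ?thesis using U[of 0] by (simp add: c_def ennreal_le_iff)
qed

lemma phi_mono: "i \<le> j \<Longrightarrow> phi (Fin i) \<le> phi (Fin j)"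
proof -
  assume ij: "i \<le> j"
  consider "0 \<le> i" | "i < 0" "0 \<le> j" | "j < 0" using ij by linarith
  then show ?thesis
  proof cases
    case 1
    then have "nat i \<le> nat j" using ij by simp
    then have "(1/2::real) ^ nat j \<le> (1/2) ^ nat i" by (rule power_decreasing) auto
    then show ?thesis using 1 ij by simp
  next
    case 2
    have a: "(1/2::real) ^ nat (-i) \<le> 1/2"
    proof -
      have "1 \<le> nat (-i)" using 2 by simp
      then have "(1/2::real) ^ nat (-i) \<le> (1/2) ^ 1" by (rule power_decreasing) auto
      then show ?thesis by simp
    qed
    have b: "(1/2::real) ^ nat j \<le> 1" by (simp add: power_le_one)
    show ?thesis using 2 a b by simp
  next
    case 3
    then have "nat (-j) \<le> nat (-i)" using ij by simp
    then have "(1/2::real) ^ nat (-i) \<le> (1/2) ^ nat (-j)" by (rule power_decreasing) auto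
    then show ?thesis using 3 ij by simp
  qed
qed

lemma phi_step: "(1/2::real) ^ (nat \<bar>i\<bar> + 1) \<le> phi (Fin (i+1)) - phi (Fin i)"
proof -
  consider "0 \<le> i" | "i = -1" | "i \<le> -2" by linarith
  then show ?thesis
  proof cases
    case 1
    have "nat (i+1) = nat i + 1" using 1 by simp
    then show ?thesis using 1 by simp
  next
    case 2
    then show ?thesis by simp
  next
    case 3
    have e: "nat (-i) = nat (-(i+1)) + 1" using 3 by simp
    have "(1/2::real) ^ (nat \<bar>i\<bar> + 1) \<le> (1/2) ^ nat \<bar>i\<bar>" by (rule power_decreasing) auto
    moreover have "phi (Fin (i+1)) - phi (Fin i) = (1/2) ^ nat (-(i+1)) - (1/2) ^ nat (-i)"
      using 3 by simp
    moreover have "(1/2::real) ^ nat (-(i+1)) - (1/2) ^ nat (-i) = (1/2) ^ nat (-i)"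
      by (simp add: e)
    moreover have "nat \<bar>i\<bar> = nat (-i)" using 3 by simp
    ultimately show ?thesis by simp
  qed
qed

lemma phi_gap:
  assumes "i < j"
  shows "(1/2::real) ^ (nat \<bar>i\<bar> + 1) \<le> phi (Fin j) - phi (Fin i)"
  using phi_step[of i] phi_mono[of "i+1" j] assms by simp

definition rk :: "int \<Rightarrow> zbar \<Rightarrow> int" where
  "rk K x = (case x of NegInf \<Rightarrow> -K | PosInf \<Rightarrow> K | Fin j \<Rightarrow> max (-K) (min K j))"

lemma rk_low: "0 \<le> K \<Longrightarrow> rk K h < K \<Longrightarrow> phi h \<le> phi (Fin (rk K h))"
proof (cases h)
  case NegInf
  assume "0 \<le> K"
  have pl: "(1/2::real)^n \<le> 1" for n by (rule power_le_one) auto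
  have "-1 \<le> phi (Fin i)" for i
    using pl[of "nat i"] by (cases "0 \<le> i") auto
  then show ?thesis using NegInf by simp
next
  case (Fin j)
  assume "rk K h < K"
  then have "j \<le> rk K h" using Fin by (auto simp: rk_def)
  then show ?thesis using Fin phi_mono by blast
next
  case PosInf
  assume "rk K h < K" then show ?thesis using PosInf by (simp add: rk_def)
qed

lemma rk_high: "0 \<le> K \<Longrightarrow> -K < rk K h \<Longrightarrow> phi (Fin (rk K h)) \<le> phi h"
proof (cases h)
  case PosInf
  assume "0 \<le> K"
  have pl: "(1/2::real)^n \<le> 1" for n by (rule power_le_one) auto
  have "phi (Fin i) \<le> 1" for i
    using pl[of "nat (-i)"] by (cases "0 \<le> i") auto
  then show ?thesis using PosInf by simp
next
  case (Fin j)
  assume "-K < rk K h"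
  then have "rk K h \<le> j" using Fin by (auto simp: rk_def)
  then show ?thesis using Fin phi_mono by blast
next
  case NegInf
  assume "-K < rk K h" then show ?thesis using NegInf by (simp add: rk_def)
qed

lemma rk_range: "0 \<le> K \<Longrightarrow> rk K h \<in> {-K..K}"
  by (cases h) (auto simp: rk_def)

lemma rk_gap:
  assumes K: "0 \<le> K" and lt: "rk K h < rk K k"
  shows "(1/2::real) ^ (nat K + 1) \<le> zdist h k"
proof -
  let ?i = "rk K h" and ?j = "rk K k"
  have ri: "?i \<in> {-K..K}" "?j \<in> {-K..K}" using rk_range[OF K] by auto
  have "(1/2::real) ^ (nat K + 1) \<le> (1/2) ^ (nat \<bar>?i\<bar> + 1)"
    by (rule power_decreasing) (use ri in auto)
  also have "\<dots> \<le> phi (Fin ?j) - phi (Fin ?i)" by (rule phi_gap[OF lt])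
  also have "\<dots> \<le> phi k - phi h"
    using rk_low[OF K, of h] rk_high[OF K, of k] lt ri by auto
  also have "\<dots> \<le> zdist h k" by (simp add: zdist_def)
  finally show ?thesis .
qed

lemma lip_evconst:
  fixes W :: "zbar \<Rightarrow> real"
  assumes K1: "0 < K" and hi: "\<And>j. K \<le> j \<Longrightarrow> W (Fin j) = W PosInf"
    and lo: "\<And>j. j \<le> -K \<Longrightarrow> W (Fin j) = W NegInf"
  shows "\<exists>C>0. (\<forall>x. \<bar>W x\<bar> \<le> C) \<and> (\<forall>h k. \<bar>W h - W k\<bar> \<le> C * zdist h k)"
proof -
  have K: "0 \<le> K" using K1 by simp
  define rep where "rep i = (if i = K then PosInf else if i = -K then NegInf else Fin i)" for i
  have Wr: "W x = W (rep (rk K x))" for x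
  proof (cases x)
    case (Fin j)
    then show ?thesis using hi[of j] lo[of j] K1
      by (auto simp: rep_def rk_def max_def min_def)
  qed (use K1 in \<open>auto simp: rep_def rk_def\<close>)
  define B where "B = 1 + (\<Sum>i\<in>{-K..K}. \<bar>W (rep i)\<bar>)"
  have Bb: "\<bar>W x\<bar> \<le> B - 1" for x
  proof -
    have "\<bar>W x\<bar> = \<bar>W (rep (rk K x))\<bar>" using Wr by simp
    also have "\<dots> \<le> (\<Sum>i\<in>{-K..K}. \<bar>W (rep i)\<bar>)"
      by (rule member_le_sum) (use rk_range[OF K] in auto)
    finally show ?thesis by (simp add: B_def)
  qed
  have B0: "0 < B" using Bb[of PosInf] by simp
  define C where "C = B + 2 * B * 2 ^ (nat K + 1)"
  have C0: "0 < C" using B0 by (simp add: C_def add_pos_nonneg)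
  have "0 \<le> 2 * B * 2 ^ (nat K + 1)" using B0 by simp
  then have "\<bar>W x\<bar> \<le> C" for x using Bb[of x] B0 unfolding C_def by linarith
  moreover have "\<bar>W h - W k\<bar> \<le> C * zdist h k" for h k
  proof (cases "rk K h = rk K k")
    case True
    then have "W h = W k" using Wr by metis
    then show ?thesis using C0 by (simp add: zdist_def)
  next
    case False
    have d: "(1/2::real) ^ (nat K + 1) \<le> zdist h k"
    proof (cases "rk K h < rk K k")
      case True
      then show ?thesis by (rule rk_gap[OF K])
    next
      case False2: False
      then have "rk K k < rk K h" using False by simp
      then have "(1/2::real) ^ (nat K + 1) \<le> zdist k h" by (rule rk_gap[OF K])
      then show ?thesis by (simp add: zdist_def abs_minus_commute)
    qed
    have "\<bar>W h - W k\<bar> \<le> 2 * B" using Bb[of h] Bb[of k] by linarith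
    also have "\<dots> = (2 * B * 2 ^ (nat K + 1)) * (1/2) ^ (nat K + 1)"
      by (simp add: power_one_over)
    also have "\<dots> \<le> (2 * B * 2 ^ (nat K + 1)) * zdist h k"
      by (rule mult_left_mono[OF d]) (use B0 in simp)
    also have "\<dots> \<le> C * zdist h k"
      by (rule mult_right_mono) (auto simp: C_def zdist_def B0 less_imp_le)
    finally show ?thesis .
  qed
  ultimately show ?thesis using C0 by blast
qed

lemma sum_approx:
  fixes g :: "int \<Rightarrow> real"
  assumes g: "g summable_on UNIV" and e: "0 < e"
  shows "\<exists>F0. finite F0 \<and> (\<forall>G. finite G \<and> G \<inter> F0 = {} \<longrightarrow> - (2*e) \<le> sum (\<lambda>k. min (g k) 0) G)
           \<and> infsum g UNIV - e \<le> sum g F0"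
proof -
  let ?S = "infsum g UNIV"
  have "(sum g \<longlongrightarrow> ?S) (finite_subsets_at_top UNIV)"
    using g unfolding summable_iff_has_sum_infsum has_sum_def .
  then have "eventually (\<lambda>F. dist (sum g F) ?S < e) (finite_subsets_at_top UNIV)"
    using e by (rule tendstoD)
  then have "\<exists>X. finite X \<and> X \<subseteq> UNIV \<and> (\<forall>Y. finite Y \<and> X \<subseteq> Y \<and> Y \<subseteq> UNIV \<longrightarrow> dist (sum g Y) ?S < e)"
    by (simp only: eventually_finite_subsets_at_top)
  then obtain F0 where F0: "finite F0" and P0: "\<forall>Y. finite Y \<and> F0 \<subseteq> Y \<and> Y \<subseteq> UNIV \<longrightarrow> dist (sum g Y) ?S < e"
    by auto
  have P: "dist (sum g Y) ?S < e" if "finite Y" "F0 \<subseteq> Y" for Y using P0 that by auto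
  have "\<forall>G. finite G \<and> G \<inter> F0 = {} \<longrightarrow> - (2*e) \<le> sum (\<lambda>k. min (g k) 0) G"
  proof (intro allI impI)
    fix G assume G: "finite G \<and> G \<inter> F0 = {}"
    let ?G' = "{k\<in>G. g k < 0}"
    have fG': "finite ?G'" using G by simp
    have "sum (\<lambda>k. min (g k) 0) G = sum (\<lambda>k. if g k < 0 then g k else 0) G"
      by (rule sum.cong) auto
    also have "\<dots> = sum g ?G'" using G by (simp add: sum.inter_filter)
    finally have eq: "sum (\<lambda>k. min (g k) 0) G = sum g ?G'" .
    have disj: "F0 \<inter> ?G' = {}" using G by auto
    have "sum g (F0 \<union> ?G') = sum g F0 + sum g ?G'"
      by (rule sum.union_disjoint) (use F0 fG' disj in auto)
    moreover have "dist (sum g (F0 \<union> ?G')) ?S < e" by (rule P) (use F0 fG' in auto)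
    moreover have "dist (sum g F0) ?S < e" by (rule P) (use F0 in auto)
    ultimately have "- (2*e) \<le> sum g ?G'" by (simp add: dist_real_def abs_less_iff)
    then show "- (2*e) \<le> sum (\<lambda>k. min (g k) 0) G" using eq by simp
  qed
  moreover have "?S - e \<le> sum g F0" using P[OF F0 order_refl] by (simp add: dist_real_def abs_less_iff)
  ultimately show ?thesis using F0 by auto
qed

lemma Vf_lower:
  assumes p: "0 < p k" "p k < 1" and U: "1 \<le> U k" "0 < U (k+1)" "0 < U (k-1)"
    and D: "p k * U (k+1) + (1 - p k) * U (k-1) \<le> D"
  shows "- ln D \<le> Vf p U k"
proof -
  let ?d = "p k * U (k+1) + (1 - p k) * U (k-1)"
  have d0: "0 < ?d" using p U by (simp add: add_pos_pos)
  have D0: "0 < D" using d0 D by simp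
  have "1 / D \<le> 1 / ?d" using D d0 by (intro divide_left_mono) auto
  also have "\<dots> \<le> U k / ?d" using U(1) d0 by (intro divide_right_mono) auto
  finally have "1 / D \<le> U k / ?d" .
  then have "ln (1/D) \<le> ln (U k / ?d)" using D0 by (intro ln_mono) auto
  moreover have "ln (1/D) = - ln D" using D0 by (simp add: ln_div)
  ultimately show ?thesis by (simp add: Vf_def)
qed

lemma Vf_trunc:
  assumes p: "0 < p k" "p k < 1" and u: "\<And>j. 1 \<le> u j" and c: "1 \<le> c"
  shows "min (Vf p u k) 0 \<le> Vf p (\<lambda>j. min (u j) c) k"
    and "u k \<le> c \<Longrightarrow> Vf p u k \<le> Vf p (\<lambda>j. min (u j) c) k"
proof -
  let ?d = "p k * u (k+1) + (1 - p k) * u (k-1)"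
  let ?d1 = "p k * min (u (k+1)) c + (1 - p k) * min (u (k-1)) c"
  have u0: "0 < u j" for j using u[of j] by simp
  have d1pos: "0 < ?d1" using p u0 c by (simp add: add_pos_pos)
  have d1le: "?d1 \<le> ?d" using p by (intro add_mono mult_left_mono) auto
  have d1c: "?d1 \<le> c"
  proof -
    have "?d1 \<le> p k * c + (1 - p k) * c" using p by (intro add_mono mult_left_mono) auto
    then show ?thesis by (simp add: algebra_simps)
  qed
  show le: "Vf p u k \<le> Vf p (\<lambda>j. min (u j) c) k" if "u k \<le> c"
  proof -
    have "u k / ?d \<le> u k / ?d1" using d1pos d1le u0[of k] by (intro divide_left_mono) auto
    then have "ln (u k / ?d) \<le> ln (u k / ?d1)" using d1pos u0[of k] d1le p u0 by (intro ln_mono) (auto intro!: divide_pos_pos add_pos_pos)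
    then show ?thesis using that by (simp add: Vf_def min_def)
  qed
  show "min (Vf p u k) 0 \<le> Vf p (\<lambda>j. min (u j) c) k"
  proof (cases "u k \<le> c")
    case True
    then show ?thesis using le by simp
  next
    case False
    then have "min (u k) c = c" by simp
    moreover have "1 \<le> c / ?d1" using d1c d1pos by simp
    ultimately have "0 \<le> Vf p (\<lambda>j. min (u j) c) k" by (simp add: Vf_def)
    then show ?thesis by simp
  qed
qed

definition Vt :: "real \<Rightarrow> real \<Rightarrow> real" where
  "Vt q l = - ln (q * l + (1 - q) / l)"

lemma Vt_tendsto:
  assumes "(p \<longlongrightarrow> q) F" "0 < q" "q < 1" "0 < l"
  shows "((\<lambda>k. Vt (p k) l) \<longlongrightarrow> Vt q l) F"
proof -
  have "0 < q * l + (1 - q) / l" using assms by (simp add: add_pos_pos)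
  then show ?thesis unfolding Vt_def
    by (intro tendsto_intros assms(1)) (use assms in auto)
qed

lemma Vt_lower:
  assumes "0 < q" "q < 1" "0 < l"
  shows "- \<bar>ln (l + 1/l)\<bar> \<le> Vt q l"
proof -
  have pos: "0 < q * l + (1 - q) / l" using assms by (simp add: add_pos_pos)
  have "q * l + (1 - q) / l \<le> l + 1/l"
  proof (rule add_mono)
    show "q * l \<le> l" using assms by (simp add: mult_le_cancel_right1)
    show "(1 - q) / l \<le> 1 / l" using assms by (simp add: divide_right_mono)
  qed
  then have "ln (q * l + (1 - q) / l) \<le> ln (l + 1/l)" using pos by (intro ln_mono) auto
  then show ?thesis unfolding Vt_def by linarith
qed

lemma Vf_geom:
  assumes "0 < U k" "U (k+1) = U k * l" "U (k-1) = U k / l" "0 < l"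
  shows "Vf p U k = Vt (p k) l"
proof -
  have "p k * U (k+1) + (1 - p k) * U (k-1) = U k * (p k * l + (1 - p k) / l)"
    using assms by (simp add: algebra_simps)
  then have "U k / (p k * U (k+1) + (1 - p k) * U (k-1)) = 1 / (p k * l + (1 - p k) / l)"
    using assms by simp
  then show ?thesis unfolding Vf_def Vt_def by (simp add: ln_div)
qed

lemma exp_W':
  fixes mu :: "zbar pmf" and v :: "int \<Rightarrow> real" and K :: int
  defines "S \<equiv> {x. \<exists>k. x = Fin k \<and> K \<le> \<bar>k\<bar>}"
  shows "measure_pmf.expectation mu (\<lambda>x. a * indicator {NegInf} x + b * indicator {PosInf} x
            + (\<Sum>k\<in>{-K<..<K}. v k * indicator {Fin k} x) - B * indicator S x)
       = a * pmf mu NegInf + b * pmf mu PosInf + (\<Sum>k\<in>{-K<..<K}. v k * pmf mu (Fin k))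
         - B * measure_pmf.prob mu S"
proof -
  have ind: "integrable (measure_pmf mu) (\<lambda>x. c * indicator A x :: real)" for c A
    by (intro integrable_mult_right integrable_real_indicator) (auto simp: measure_pmf.emeasure_eq_measure)
  have ind1: "integrable (measure_pmf mu) (indicator A :: zbar \<Rightarrow> real)" for A
    by (intro integrable_real_indicator) (auto simp: measure_pmf.emeasure_eq_measure)
  have ie: "measure_pmf.expectation mu (\<lambda>x. c * indicator A x :: real) = c * measure_pmf.prob mu A" for c A
    by (simp add: integral_indicator)
  have isum: "integrable (measure_pmf mu) (\<lambda>x. \<Sum>k\<in>{-K<..<K}. v k * indicator {Fin k} x :: real)"
    by (intro Bochner_Integration.integrable_sum ind)
  have esum: "measure_pmf.expectation mu (\<lambda>x. \<Sum>k\<in>{-K<..<K}. v k * indicator {Fin k} x :: real)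
     = (\<Sum>k\<in>{-K<..<K}. v k * pmf mu (Fin k))"
    by (subst Bochner_Integration.integral_sum) (auto simp: ind ind1 ie measure_pmf_single)
  have "measure_pmf.expectation mu (\<lambda>x. a * indicator {NegInf} x + b * indicator {PosInf} x
            + (\<Sum>k\<in>{-K<..<K}. v k * indicator {Fin k} x) - B * indicator S x)
      = measure_pmf.expectation mu (\<lambda>x. a * indicator {NegInf} x + b * indicator {PosInf} x
            + (\<Sum>k\<in>{-K<..<K}. v k * indicator {Fin k} x)) - measure_pmf.expectation mu (\<lambda>x. B * indicator S x)"
    by (intro Bochner_Integration.integral_diff Bochner_Integration.integrable_add ind isum)
  also have "measure_pmf.expectation mu (\<lambda>x. a * indicator {NegInf} x + b * indicator {PosInf} x
            + (\<Sum>k\<in>{-K<..<K}. v k * indicator {Fin k} x))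
      = measure_pmf.expectation mu (\<lambda>x. a * indicator {NegInf} x + b * indicator {PosInf} x)
        + measure_pmf.expectation mu (\<lambda>x. \<Sum>k\<in>{-K<..<K}. v k * indicator {Fin k} x)"
    by (intro Bochner_Integration.integral_add Bochner_Integration.integrable_add ind isum)
  also have "measure_pmf.expectation mu (\<lambda>x. a * indicator {NegInf} x + b * indicator {PosInf} x)
      = measure_pmf.expectation mu (\<lambda>x. a * indicator {NegInf} x) + measure_pmf.expectation mu (\<lambda>x. b * indicator {PosInf} x)"
    by (intro Bochner_Integration.integral_add ind)
  finally show ?thesis by (simp only: ie esum measure_pmf_single)
qed

lemma GEN:
  fixes p :: "int \<Rightarrow> real" and mu :: "zbar pmf" and u :: "int \<Rightarrow> real"
  assumes p: "\<And>k. 0 < p k \<and> p k < 1" and tp: "(p \<longlongrightarrow> pp) at_top" and tm: "(p \<longlongrightarrow> pm) at_bot"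
    and pm: "0 < pm" "pm < 1" and pp: "0 < pp" "pp < 1"
    and u: "\<And>k. 1 \<le> u k" and sm: "(\<lambda>k. pmf mu (Fin k) * Vf p u k) summable_on UNIV"
    and lm: "0 < lm" and lp: "0 < lp" and e: "0 < e"
  shows "\<exists>U W C. (\<forall>k. 0 < U k) \<and> (1 \<le> lp \<longrightarrow> (\<forall>k\<ge>0. 1 \<le> U k)) \<and> (lm \<le> 1 \<longrightarrow> (\<forall>k<0. 1 \<le> U k))
     \<and> (\<forall>k. W (Fin k) \<le> Vf p U k) \<and> 0 < C \<and> (\<forall>x. \<bar>W x\<bar> \<le> C) \<and> (\<forall>h k. \<bar>W h - W k\<bar> \<le> C * zdist h k)
     \<and> (\<Sum>\<^sub>\<infinity>k. pmf mu (Fin k) * Vf p u k) + pmf mu NegInf * Vt pm lm + pmf mu PosInf * Vt pp lp - 6 * e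
        \<le> measure_pmf.expectation mu W"
proof -
  define m where "m k = pmf mu (Fin k)" for k
  define g where "g k = m k * Vf p u k" for k
  have m0: "0 \<le> m k" for k by (simp add: m_def)
  have geq: "g = (\<lambda>k. pmf mu (Fin k) * Vf p u k)" by (simp add: fun_eq_iff g_def m_def)
  have gs: "g summable_on UNIV" using sm by (simp add: geq)
  obtain F0 where F0: "finite F0"
    and Gb: "\<And>G. finite G \<Longrightarrow> G \<inter> F0 = {} \<Longrightarrow> - (2*e) \<le> sum (\<lambda>k. min (g k) 0) G"
    and F0s: "infsum g UNIV - e \<le> sum g F0"
    using sum_approx[OF gs e] by blast
  define c where "c = 1 + (\<Sum>k\<in>F0. u k)"
  have u0: "0 \<le> u k" for k using u[of k] by simp
  have c1: "1 \<le> c" using u0 by (simp add: c_def sum_nonneg)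
  have cF: "u k \<le> c" if "k \<in> F0" for k
  proof -
    have "u k \<le> (\<Sum>k\<in>F0. u k)" by (rule member_le_sum) (use that F0 u0 in auto)
    then show ?thesis by (simp add: c_def)
  qed
  define u1 where "u1 j = min (u j) c" for j
  have u1b: "1 \<le> u1 j" "u1 j \<le> c" for j using u[of j] c1 by (auto simp: u1_def)
  define B where "B = \<bar>ln c\<bar> + \<bar>ln (c*(lp+1))\<bar> + \<bar>ln (c*(1+1/lm))\<bar> + \<bar>ln (lp + 1/lp)\<bar>
     + \<bar>ln (lm + 1/lm)\<bar> + \<bar>Vt pp lp\<bar> + \<bar>Vt pm lm\<bar> + e + 1"
  have absnn: "0 \<le> \<bar>ln c\<bar>" "0 \<le> \<bar>ln (c*(lp+1))\<bar>" "0 \<le> \<bar>ln (c*(1+1/lm))\<bar>" "0 \<le> \<bar>ln (lp + 1/lp)\<bar>"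
     "0 \<le> \<bar>ln (lm + 1/lm)\<bar>" "0 \<le> \<bar>Vt pp lp\<bar>" "0 \<le> \<bar>Vt pm lm\<bar>" by auto
  have B0: "0 < B" using e absnn unfolding B_def by linarith
  have Bge: "\<bar>ln c\<bar> \<le> B" "\<bar>ln (c*(lp+1))\<bar> \<le> B" "\<bar>ln (c*(1+1/lm))\<bar> \<le> B" "\<bar>ln (lp + 1/lp)\<bar> \<le> B"
     "\<bar>ln (lm + 1/lm)\<bar> \<le> B" "\<bar>Vt pp lp\<bar> + e \<le> B" "\<bar>Vt pm lm\<bar> + e \<le> B"
    using e absnn unfolding B_def by linarith+
  define A where "A n = {x. \<exists>k. x = Fin k \<and> int n \<le> \<bar>k\<bar>}" for n :: nat
  have Adec: "antimono_on UNIV A"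
    by (rule monotone_onI) (auto simp: A_def)
  have Aint: "(\<Inter>n. A n) = {}"
  proof -
    have "x \<notin> (\<Inter>n. A n)" for x
    proof (cases x)
      case (Fin k)
      then have "x \<notin> A (nat \<bar>k\<bar> + 1)" by (auto simp: A_def)
      then show ?thesis by blast
    next
      case NegInf
      then have "x \<notin> A 0" by (auto simp: A_def)
      then show ?thesis by blast
    next
      case PosInf
      then have "x \<notin> A 0" by (auto simp: A_def)
      then show ?thesis by blast
    qed
    then show ?thesis by blast
  qed
  have "(\<lambda>n. measure_pmf.prob mu (A n)) \<longlonglongrightarrow> measure_pmf.prob mu (\<Inter>n. A n)"
    by (rule measure_pmf.finite_Lim_measure_decseq) (use Adec in auto)
  then have "(\<lambda>n. measure_pmf.prob mu (A n)) \<longlonglongrightarrow> 0" using Aint by simp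
  then have ev1: "eventually (\<lambda>n. measure_pmf.prob mu (A n) < e / B) sequentially"
    using e B0 by (intro order_tendstoD) auto
  define N0 where "N0 = 1 + (\<Sum>k\<in>F0. nat \<bar>k\<bar>)"
  have ev2: "eventually (\<lambda>n. N0 \<le> n) sequentially" by (rule eventually_ge_at_top)
  obtain n where n1: "measure_pmf.prob mu (A n) < e / B" and n2: "N0 \<le> n"
    using eventually_conj[OF ev1 ev2] by (auto simp: eventually_sequentially)
  define K where "K = int n"
  have K1: "1 \<le> K" using n2 by (simp add: K_def N0_def)
  have F0K: "\<bar>k\<bar> < K" if "k \<in> F0" for k
  proof -
    have "nat \<bar>k\<bar> \<le> (\<Sum>k\<in>F0. nat \<bar>k\<bar>)" by (rule member_le_sum) (use that F0 in auto)
    then show ?thesis using n2 by (simp add: K_def N0_def)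
  qed
  define U where "U k = (if K < k then u1 K * lp ^ nat (k - K)
                         else if k < -K then u1 (-K) * (1/lm) ^ nat (-K - k) else u1 k)" for k
  have Umid: "U k = u1 k" if "\<bar>k\<bar> \<le> K" for k using that by (auto simp: U_def)
  have Upos: "0 < U k" for k
    using u1b[of K] u1b[of "-K"] u1b[of k] lm lp by (auto simp: U_def)
  have Uright: "U (k+1) = U k * lp \<and> U (k-1) = U k / lp" if "K < k" for k
  proof
    have "nat (k + 1 - K) = Suc (nat (k - K))" using that by simp
    then show "U (k+1) = U k * lp" using that by (simp add: U_def)
  next
    show "U (k-1) = U k / lp"
    proof (cases "K < k - 1")
      case True
      have "nat (k - K) = Suc (nat (k - 1 - K))" using True by simp
      then show ?thesis using True that lp by (simp add: U_def)
    next
      case False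
      then have "k = K + 1" using that by simp
      then show ?thesis using lp K1 by (simp add: U_def)
    qed
  qed
  have Uleft: "U (k+1) = U k * lm \<and> U (k-1) = U k / lm" if "k < -K" for k
  proof
    have "nat (-K - (k - 1)) = Suc (nat (-K - k))" using that by simp
    then show "U (k-1) = U k / lm" using that K1 lm by (simp add: U_def divide_simps)
  next
    show "U (k+1) = U k * lm"
    proof (cases "k + 1 < -K")
      case True
      have "nat (-K - k) = Suc (nat (-K - (k+1)))" using True by simp
      then show ?thesis using True that lm K1 by (simp add: U_def)
    next
      case False
      then have "k = -K - 1" using that by simp
      then show ?thesis using lm K1 by (simp add: U_def)
    qed
  qed
  have VUr: "Vf p U k = Vt (p k) lp" if "K < k" for k
    using Uright[OF that] Upos[of k] lp by (intro Vf_geom) auto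
  have VUl: "Vf p U k = Vt (p k) lm" if "k < -K" for k
    using Uleft[OF that] Upos[of k] lm by (intro Vf_geom) auto
  have VUm: "Vf p U k = Vf p u1 k" if "\<bar>k\<bar> < K" for k
    using that Umid[of k] Umid[of "k+1"] Umid[of "k-1"] by (simp add: Vf_def)
  have pk: "0 < p k" "p k < 1" for k using p[of k] by auto
  have VUlow: "- B \<le> Vf p U k" for k
  proof -
    consider "\<bar>k\<bar> < K" | "k = K" | "k = -K" | "K < k" | "k < -K" by linarith
    then show ?thesis
    proof cases
      case 1
      have "- ln c \<le> Vf p u1 k"
      proof (rule Vf_lower[OF pk])
        show "1 \<le> u1 k" "0 < u1 (k+1)" "0 < u1 (k-1)" using u1b[of k] u1b[of "k+1"] u1b[of "k-1"] by auto
        have "p k * u1 (k+1) + (1 - p k) * u1 (k-1) \<le> p k * c + (1 - p k) * c"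
          using pk[of k] u1b by (intro add_mono mult_left_mono) auto
        then show "p k * u1 (k+1) + (1 - p k) * u1 (k-1) \<le> c" by (simp add: algebra_simps)
      qed
      then show ?thesis using VUm[OF 1] Bge(1) abs_ge_self[of "ln c"] by linarith
    next
      case 2
      have "- ln (c*(lp+1)) \<le> Vf p U k"
      proof (rule Vf_lower[OF pk])
        show "1 \<le> U k" using Umid[of k] 2 u1b[of k] K1 by simp
        show "0 < U (k+1)" "0 < U (k-1)" using Upos by auto
        have e1: "U (k+1) = u1 K * lp" using 2 by (simp add: U_def)
        have e2: "U (k-1) = u1 (K - 1)" using 2 K1 by (simp add: U_def)
        have "p k * U (k+1) + (1 - p k) * U (k-1) \<le> 1 * (c * lp) + 1 * c"
          unfolding e1 e2 using pk[of k] u1b[of K] u1b[of "K-1"] lp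
          by (intro add_mono mult_mono) auto
        then show "p k * U (k+1) + (1 - p k) * U (k-1) \<le> c * (lp + 1)" by (simp add: algebra_simps)
      qed
      then show ?thesis using Bge(2) abs_ge_self[of "ln (c*(lp+1))"] by linarith
    next
      case 3
      have "- ln (c*(1+1/lm)) \<le> Vf p U k"
      proof (rule Vf_lower[OF pk])
        show "1 \<le> U k" using Umid[of k] 3 u1b[of k] K1 by simp
        show "0 < U (k+1)" "0 < U (k-1)" using Upos by auto
        have e1: "U (k-1) = u1 (-K) / lm" using 3 K1 by (simp add: U_def)
        have e2: "U (k+1) = u1 (-K + 1)" using 3 K1 by (simp add: U_def)
        have "u1 (-K) / lm \<le> c / lm" using u1b[of "-K"] lm by (simp add: divide_right_mono)
        then have "p k * U (k+1) + (1 - p k) * U (k-1) \<le> 1 * c + 1 * (c / lm)"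
          unfolding e1 e2 using pk[of k] u1b[of "-K+1"] u1b[of "-K"] lm
          by (intro add_mono mult_mono) auto
        then show "p k * U (k+1) + (1 - p k) * U (k-1) \<le> c * (1 + 1/lm)" by (simp add: algebra_simps)
      qed
      then show ?thesis using Bge(3) abs_ge_self[of "ln (c*(1+1/lm))"] by linarith
    next
      case 4
      then show ?thesis using VUr[OF 4] Vt_lower[OF pk lp, of k] Bge(4) by linarith
    next
      case 5
      then show ?thesis using VUl[OF 5] Vt_lower[OF pk lm, of k] Bge(5) by linarith
    qed
  qed
  have "eventually (\<lambda>k. Vt pp lp - e < Vt (p k) lp) at_top"
    using Vt_tendsto[OF tp pp lp] e by (intro order_tendstoD) auto
  then obtain N1 where N1: "\<And>k. N1 \<le> k \<Longrightarrow> Vt pp lp - e < Vt (p k) lp"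
    by (auto simp: eventually_at_top_linorder)
  have "eventually (\<lambda>k. Vt pm lm - e < Vt (p k) lm) at_bot"
    using Vt_tendsto[OF tm pm lm] e by (intro order_tendstoD) auto
  then obtain N2 where N2: "\<And>k. k \<le> N2 \<Longrightarrow> Vt pm lm - e < Vt (p k) lm"
    by (auto simp: eventually_at_bot_linorder)
  define K2 where "K2 = max (K+1) (max N1 (-N2))"
  define W where "W x = (case x of NegInf \<Rightarrow> Vt pm lm - e | PosInf \<Rightarrow> Vt pp lp - e
     | Fin k \<Rightarrow> (if K2 \<le> k then Vt pp lp - e else if k \<le> -K2 then Vt pm lm - e else Vf p U k))" for x
  have WV: "W (Fin k) \<le> Vf p U k" for k
  proof -
    consider "K2 \<le> k" | "k \<le> -K2" | "\<not> K2 \<le> k \<and> \<not> k \<le> -K2" by linarith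
    then show ?thesis
    proof cases
      case 1
      then have "K < k" "N1 \<le> k" by (auto simp: K2_def)
      then show ?thesis using 1 VUr N1 by (simp add: W_def less_imp_le)
    next
      case 2
      then have "k < -K" "k \<le> N2" "\<not> K2 \<le> k" using K1 by (auto simp: K2_def)
      then show ?thesis using 2 VUl N2 by (simp add: W_def less_imp_le)
    qed (simp add: W_def)
  qed
  have K2pos: "0 < K2" using K1 by (simp add: K2_def)
  obtain C where C: "0 < C" "\<forall>x. \<bar>W x\<bar> \<le> C" "\<forall>h k. \<bar>W h - W k\<bar> \<le> C * zdist h k"
  proof -
    have h1: "W (Fin j) = W PosInf" if "K2 \<le> j" for j using that by (simp add: W_def)
    have h2: "W (Fin j) = W NegInf" if "j \<le> -K2" for j using that K2pos by (simp add: W_def)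
    show ?thesis using lip_evconst[OF K2pos h1 h2] that by blast
  qed
  define W' where "W' x = (Vt pm lm - e) * indicator {NegInf} x + (Vt pp lp - e) * indicator {PosInf} x
     + (\<Sum>k\<in>{-K<..<K}. Vf p u1 k * indicator {Fin k} x) - B * indicator {x. \<exists>k. x = Fin k \<and> K \<le> \<bar>k\<bar>} x" for x
  have W'W: "W' x \<le> W x" for x
  proof (cases x)
    case NegInf
    then show ?thesis by (simp add: W'_def W_def)
  next
    case PosInf
    then show ?thesis by (simp add: W'_def W_def)
  next
    case (Fin k)
    show ?thesis
    proof (cases "\<bar>k\<bar> < K")
      case True
      have s: "(\<Sum>j\<in>{-K<..<K}. Vf p u1 j * indicator {Fin j} (Fin k)) = Vf p u1 k"
      proof -
        have "{-K<..<K} \<inter> {k} = {k}" using True by auto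
        then show ?thesis by (simp add: indicator_def sum.delta)
      qed
      have "\<not> K2 \<le> k" "\<not> k \<le> -K2" using True by (auto simp: K2_def)
      then show ?thesis using Fin True s VUm[OF True] by (simp add: W'_def W_def)
    next
      case False
      have s: "(\<Sum>j\<in>{-K<..<K}. Vf p u1 j * indicator {Fin j} (Fin k)) = 0"
        using False by (intro sum.neutral) (auto simp: indicator_def)
      have W'v: "W' x = - B" using Fin False s by (simp add: W'_def)
      have "- B \<le> Vt pp lp - e" "- B \<le> Vt pm lm - e"
        using Bge(6,7) abs_ge_minus_self[of "Vt pp lp"] abs_ge_minus_self[of "Vt pm lm"] by linarith+
      then have "- B \<le> W (Fin k)"
        using VUlow[of k] by (auto simp: W_def)
      then show ?thesis using W'v Fin by simp
    qed
  qed
  have intW: "integrable (measure_pmf mu) W"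
    by (rule measure_pmf.integrable_const_bound[where B=C]) (use C in auto)
  have intW': "integrable (measure_pmf mu) W'"
  proof -
    have ind: "integrable (measure_pmf mu) (\<lambda>x. c * indicator A x :: real)" for c A
      by (intro integrable_mult_right integrable_real_indicator) (auto simp: measure_pmf.emeasure_eq_measure)
    show ?thesis unfolding W'_def
      by (intro Bochner_Integration.integrable_diff Bochner_Integration.integrable_add Bochner_Integration.integrable_sum ind)
  qed
  have EW': "measure_pmf.expectation mu W' = (Vt pm lm - e) * pmf mu NegInf + (Vt pp lp - e) * pmf mu PosInf
      + (\<Sum>k\<in>{-K<..<K}. Vf p u1 k * pmf mu (Fin k)) - B * measure_pmf.prob mu (A n)"
    unfolding W'_def A_def K_def by (rule exp_W')
  have "measure_pmf.expectation mu W' \<le> measure_pmf.expectation mu W"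
    by (rule integral_mono[OF intW' intW W'W])
  have am1: "pmf mu NegInf \<le> 1" "pmf mu PosInf \<le> 1" by (auto simp: pmf_le_1)
  have t1: "(Vt pm lm - e) * pmf mu NegInf \<ge> Vt pm lm * pmf mu NegInf - e"
    using am1 e by (simp add: algebra_simps mult_left_le)
  have t2: "(Vt pp lp - e) * pmf mu PosInf \<ge> Vt pp lp * pmf mu PosInf - e"
    using am1 e by (simp add: algebra_simps mult_left_le)
  have t4: "B * measure_pmf.prob mu (A n) \<le> e"
    using n1 B0 by (simp add: less_divide_eq mult.commute less_imp_le)
  have t3: "infsum g UNIV - 3 * e \<le> (\<Sum>k\<in>{-K<..<K}. Vf p u1 k * pmf mu (Fin k))"
  proof -
    have FW: "F0 \<subseteq> {-K<..<K}" using F0K by fastforce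
    have "(\<Sum>k\<in>{-K<..<K}. Vf p u1 k * pmf mu (Fin k))
        = (\<Sum>k\<in>F0. Vf p u1 k * m k) + (\<Sum>k\<in>{-K<..<K} - F0. Vf p u1 k * m k)"
      using FW by (simp add: m_def sum.subset_diff[OF FW])
    moreover have "sum g F0 \<le> (\<Sum>k\<in>F0. Vf p u1 k * m k)"
    proof (rule sum_mono)
      fix k assume "k \<in> F0"
      then have "Vf p u k \<le> Vf p u1 k" unfolding u1_def using Vf_trunc(2)[of p k u c, OF pk(1)[of k] pk(2)[of k] u c1] cF by blast
      then show "g k \<le> Vf p u1 k * m k" using m0[of k] by (simp add: g_def mult_left_mono mult.commute)
    qed
    moreover have "- (2*e) \<le> (\<Sum>k\<in>{-K<..<K} - F0. Vf p u1 k * m k)"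
    proof -
      have "- (2*e) \<le> sum (\<lambda>k. min (g k) 0) ({-K<..<K} - F0)" by (rule Gb) auto
      also have "\<dots> \<le> (\<Sum>k\<in>{-K<..<K} - F0. Vf p u1 k * m k)"
      proof (rule sum_mono)
        fix k
        have "min (Vf p u k) 0 \<le> Vf p u1 k" unfolding u1_def using Vf_trunc(1)[of p k u c, OF pk(1)[of k] pk(2)[of k] u c1] by blast
        then have "m k * min (Vf p u k) 0 \<le> m k * Vf p u1 k" using m0[of k] by (rule mult_left_mono)
        moreover have "m k * min (Vf p u k) 0 = min (g k) 0"
        proof (cases "Vf p u k \<le> 0")
          case True
          then have "g k \<le> 0" using m0[of k] by (simp add: g_def mult_nonneg_nonpos)
          then show ?thesis using True by (simp add: g_def)
        next
          case False
          then have "0 \<le> g k" using m0[of k] by (simp add: g_def)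
          then show ?thesis using False by (simp add: g_def)
        qed
        ultimately show "min (g k) 0 \<le> Vf p u1 k * m k" by (simp add: mult.commute)
      qed
      finally show ?thesis .
    qed
    ultimately show ?thesis using F0s by linarith
  qed
  have gi: "infsum g UNIV = (\<Sum>\<^sub>\<infinity>k. pmf mu (Fin k) * Vf p u k)" by (simp add: geq)
  have "(\<Sum>\<^sub>\<infinity>k. pmf mu (Fin k) * Vf p u k) + pmf mu NegInf * Vt pm lm + pmf mu PosInf * Vt pp lp - 6 * e
        \<le> measure_pmf.expectation mu W'"
    using EW' t1 t2 t3 t4 gi by (simp add: algebra_simps)
  also have "\<dots> \<le> measure_pmf.expectation mu W" by fact
  finally have fin: "(\<Sum>\<^sub>\<infinity>k. pmf mu (Fin k) * Vf p u k) + pmf mu NegInf * Vt pm lm + pmf mu PosInf * Vt pp lp - 6 * e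
        \<le> measure_pmf.expectation mu W" .
  have UR1: "1 \<le> lp \<longrightarrow> (\<forall>k\<ge>0. 1 \<le> U k)"
  proof (intro impI allI)
    fix k :: int assume lp1: "1 \<le> lp" and k0: "0 \<le> k"
    show "1 \<le> U k"
    proof (cases "K < k")
      case True
      have "1 \<le> lp ^ nat (k - K)" using lp1 by simp
      then have "1 * 1 \<le> u1 K * lp ^ nat (k - K)" using u1b[of K] by (intro mult_mono) auto
      then show ?thesis using True by (simp add: U_def)
    next
      case False
      then show ?thesis using k0 K1 u1b[of k] by (simp add: U_def)
    qed
  qed
  have UR2: "lm \<le> 1 \<longrightarrow> (\<forall>k<0. 1 \<le> U k)"
  proof (intro impI allI)
    fix k :: int assume lm1: "lm \<le> 1" and k0: "k < 0"
    show "1 \<le> U k"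
    proof (cases "k < -K")
      case True
      have "1 \<le> 1 / lm" using lm1 lm by simp
      then have "1 \<le> (1/lm) ^ nat (-K - k)" by simp
      then have "1 * 1 \<le> u1 (-K) * (1/lm) ^ nat (-K - k)" using u1b[of "-K"] by (intro mult_mono) auto
      then show ?thesis using True K1 by (simp add: U_def)
    next
      case False
      then show ?thesis using k0 K1 u1b[of k] by (simp add: U_def)
    qed
  qed
  show ?thesis
    using Upos UR1 UR2 WV C fin by blast
qed

lemma mono_lim:
  fixes f :: "real \<Rightarrow> ereal"
  assumes mono: "\<And>a b. 0 < a \<Longrightarrow> a \<le> b \<Longrightarrow> f a \<le> f b"
  shows "(f \<longlongrightarrow> (INF e\<in>{0<..}. f e)) (at_right 0)"
proof (rule order_tendstoI)
  fix a assume a: "a < (INF e\<in>{0<..}. f e)"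
  show "eventually (\<lambda>x. a < f x) (at_right 0)"
    using eventually_at_right_real[of "0::real" 1, OF zero_less_one]
  proof (rule eventually_mono)
    fix x :: real assume "x \<in> {0<..<1}"
    then have "(INF e\<in>{0<..}. f e) \<le> f x" by (intro INF_lower) auto
    then show "a < f x" using a by simp
  qed
next
  fix a assume a: "(INF e\<in>{0<..}. f e) < a"
  show "eventually (\<lambda>x. f x < a) (at_right 0)"
  proof -
    from a obtain e where e: "e \<in> {0<..}" "f e < a" by (auto simp: INF_less_iff)
    have e0: "(0::real) < e" using e by simp
    show ?thesis using eventually_at_right_real[OF e0]
    proof (rule eventually_mono)
      fix x :: real assume "x \<in> {0<..<e}"
      then have "f x \<le> f e" by (intro mono) auto
      then show "f x < a" using e by simp
    qed
  qed
qed

lemma limsup_bound: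
  fixes P :: "nat \<Rightarrow> real"
  assumes P: "\<And>n. 1 \<le> n \<Longrightarrow> P n \<le> Kc * exp (- (real n * r))" and Kc: "0 < Kc"
  shows "limsup (\<lambda>n. ereal (1 / real n) * eln (P n)) \<le> ereal (- r)"
proof -
  have ev: "eventually (\<lambda>n. ereal (1 / real n) * eln (P n) \<le> ereal (ln Kc / real n - r)) sequentially"
    using eventually_ge_at_top[of 1]
  proof (rule eventually_mono)
    fix n :: nat assume n: "1 \<le> n"
    have n0: "0 < real n" using n by simp
    show "ereal (1 / real n) * eln (P n) \<le> ereal (ln Kc / real n - r)"
    proof (cases "P n \<le> 0")
      case True
      then show ?thesis using n0 by (simp add: eln_def)
    next
      case False
      then have "ln (P n) \<le> ln (Kc * exp (- (real n * r)))" using P[OF n] by (intro ln_mono) auto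
      also have "\<dots> = ln Kc - real n * r" using Kc by (simp add: ln_mult)
      finally have "ln (P n) / real n \<le> (ln Kc - real n * r) / real n"
        using n0 by (simp add: divide_right_mono)
      also have "\<dots> = ln Kc / real n - r" using n0 by (simp add: field_simps)
      finally show ?thesis using False by (simp add: eln_def)
    qed
  qed
  have lim: "((\<lambda>n. ereal (ln Kc / real n - r)) \<longlongrightarrow> ereal (- r)) sequentially"
    using tendsto_diff[OF lim_const_over_n[of "ln Kc"] tendsto_const[of r]] by simp
  have "limsup (\<lambda>n. ereal (1 / real n) * eln (P n)) \<le> limsup (\<lambda>n. ereal (ln Kc / real n - r))"
    by (rule Limsup_mono[OF ev])
  also have "\<dots> = ereal (- r)" by (rule lim_imp_Limsup[OF _ lim]) simp
  finally show ?thesis .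
qed

lemma ICr_zero:
  assumes "0 < q" "q < 1"
  shows "ICr q 0 = ereal (Vt q (sqrt ((1 - q) / q)))"
proof -
  define s where "s = sqrt ((1 - q) / q)"
  have s0: "0 < s" using assms by (simp add: s_def)
  have s2: "s ^ 2 = (1 - q) / q" using assms by (simp add: s_def)
  define x where "x = q * s + (1 - q) / s"
  have x0: "0 < x" using assms s0 by (simp add: x_def add_pos_pos)
  have "x ^ 2 = q^2 * s^2 + 2 * q * (1 - q) + (1 - q)^2 / s^2"
    using s0 by (simp add: x_def power2_eq_square field_simps)
  also have "\<dots> = 4 * q * (1 - q)"
  proof -
    have a: "q^2 * s^2 = q * (1 - q)" unfolding s2 using assms by (simp add: power2_eq_square)
    have b: "(1 - q)^2 / s^2 = q * (1 - q)" unfolding s2 using assms by (simp add: power2_eq_square field_simps)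
    show ?thesis unfolding a b by simp
  qed
  finally have x2: "x ^ 2 = (2 * q) * (2 * (1 - q))" by simp
  have "ln (x ^ 2) = 2 * ln x" using x0 by (simp add: ln_realpow)
  then have "2 * ln x = ln (2 * q) + ln (2 * (1 - q))" using x2 assms by (simp add: ln_mult)
  then have "- ln x = 1/2 * ln (1 / (2 * (1 - q))) + 1/2 * ln (1 / (2 * q))"
    using assms by (simp add: ln_div)
  then show ?thesis by (simp add: ICr_def Vt_def x_def s_def)
qed

lemma ICr_min:
  assumes "0 < q" "q < 1"
  shows "ICr q (2 * q - 1) = ereal (Vt q 1)"
proof -
  have a: "(1 - (2 * q - 1)) / (2 * (1 - q)) = 1" using assms by (simp add: field_simps)
  have b: "(1 + (2 * q - 1)) / (2 * q) = 1" using assms by (simp add: field_simps)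
  show ?thesis using assms a b by (simp add: ICr_def Vt_def)
qed

lemma m_le_a0: "pmf mu (Fin k) \<le> 1 - pmf mu NegInf - pmf mu PosInf"
proof -
  have "measure_pmf.prob mu {NegInf, PosInf, Fin k} = pmf mu NegInf + pmf mu PosInf + pmf mu (Fin k)"
    by (simp add: measure_measure_pmf_finite)
  moreover have "measure_pmf.prob mu {NegInf, PosInf, Fin k} \<le> 1" by simp
  ultimately show ?thesis by simp
qed

lemma DV_exists:
  fixes mu :: "zbar pmf"
  assumes D: "ereal D < ereal (1 - pmf mu NegInf - pmf mu PosInf) * IDV p (\<lambda>k. pmf mu (Fin k) / (1 - pmf mu NegInf - pmf mu PosInf))"
  shows "\<exists>u. (\<forall>k. 1 \<le> u k) \<and> (\<lambda>k. pmf mu (Fin k) * Vf p u k) summable_on UNIV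
           \<and> D < (\<Sum>\<^sub>\<infinity>k. pmf mu (Fin k) * Vf p u k)"
proof -
  define a0 where "a0 = 1 - pmf mu NegInf - pmf mu PosInf"
  have ma: "pmf mu (Fin k) \<le> a0" for k unfolding a0_def by (rule m_le_a0)
  have a00: "0 \<le> a0" using ma[of 0] pmf_nonneg[of mu "Fin 0"] by linarith
  show ?thesis
  proof (cases "a0 = 0")
    case True
    then have m0: "pmf mu (Fin k) = 0" for k using ma[of k] pmf_nonneg[of mu "Fin k"] by simp
    have z: "ereal 0 * X = 0" for X :: ereal by (simp add: zero_ereal_def[symmetric])
    have "ereal D < 0" using D True z unfolding a0_def by metis
    then have "D < 0" by simp
    then show ?thesis by (intro exI[of _ "\<lambda>k. 1"]) (simp add: m0)
  next
    case False
    then have a0p: "0 < a0" using a00 by simp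
    define nu where "nu k = pmf mu (Fin k) / a0" for k
    let ?Set = "{u :: int \<Rightarrow> real. (\<forall>k. 1 \<le> u k) \<and>
        (\<lambda>k. nu k * ln (u k / (p k * u (k + 1) + (1 - p k) * u (k - 1)))) summable_on UNIV}"
    have nueq: "nu = (\<lambda>k. pmf mu (Fin k) / a0)" by (simp add: fun_eq_iff nu_def)
    have "ereal D < ereal a0 * IDV p nu" using D by (simp add: a0_def nueq)
    then have "ereal (D / a0) < IDV p nu"
      using a0p by (cases "IDV p nu") (auto simp: field_simps)
    then obtain u where u: "u \<in> ?Set"
      and lt: "ereal (D / a0) < ereal (\<Sum>\<^sub>\<infinity>k. nu k * ln (u k / (p k * u (k + 1) + (1 - p k) * u (k - 1))))"
      unfolding IDV_def by (auto simp: less_SUP_iff)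
    have eq: "pmf mu (Fin k) * Vf p u k = a0 * (nu k * ln (u k / (p k * u (k + 1) + (1 - p k) * u (k - 1))))" for k
      using a0p by (simp add: nu_def Vf_def)
    have sm: "(\<lambda>k. pmf mu (Fin k) * Vf p u k) summable_on UNIV"
      unfolding eq using u by (intro summable_on_cmult_right) auto
    have "(\<Sum>\<^sub>\<infinity>k. pmf mu (Fin k) * Vf p u k) = a0 * (\<Sum>\<^sub>\<infinity>k. nu k * ln (u k / (p k * u (k + 1) + (1 - p k) * u (k - 1))))"
      unfolding eq by (rule infsum_cmult_right') 
    moreover have "D < a0 * (\<Sum>\<^sub>\<infinity>k. nu k * ln (u k / (p k * u (k + 1) + (1 - p k) * u (k - 1))))"
      using lt a0p by (simp add: divide_less_eq mult.commute)
    ultimately show ?thesis using u sm by auto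
  qed
qed

lemma eln_mono: "x \<le> y \<Longrightarrow> eln x \<le> eln y"
  by (auto simp: eln_def)

lemma prob_ball_mono: "a \<le> b \<Longrightarrow> prob_ball p n mu a \<le> prob_ball p n mu b"
  unfolding prob_ball_def
  by (rule measure_pmf.finite_measure_mono) (auto simp: BLball_def)

lemma split_bound:
  "prob_ball p n mu e \<le> measure_pmf.prob (walk p (Fin 0) (n-1)) {xs. empirical xs \<in> BLball mu e \<and> (\<exists>k\<in>{k. 0 \<le> k}. last xs = Fin k)}
     + measure_pmf.prob (walk p (Fin 0) (n-1)) {xs. empirical xs \<in> BLball mu e \<and> (\<exists>k\<in>{k. k < 0}. last xs = Fin k)}"
proof -
  let ?M = "walk p (Fin 0) (n-1)"
  let ?E = "{xs. empirical xs \<in> BLball mu e}"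
  let ?A = "{xs. empirical xs \<in> BLball mu e \<and> (\<exists>k\<in>{k. 0 \<le> k}. last xs = Fin k)}"
  let ?B = "{xs. empirical xs \<in> BLball mu e \<and> (\<exists>k\<in>{k. k < 0}. last xs = Fin k)}"
  have sub: "?E \<inter> set_pmf ?M \<subseteq> ?A \<union> ?B"
  proof
    fix xs assume xs: "xs \<in> ?E \<inter> set_pmf ?M"
    then have ne: "xs \<noteq> []" using walk_set[of xs p "Fin 0" "n-1"] by auto
    have "\<exists>j. last xs = Fin j" using walk_fin[of xs p 0 "n-1"] xs last_in_set[OF ne] by auto
    then obtain j where "last xs = Fin j" by blast
    then show "xs \<in> ?A \<union> ?B" using xs by (cases "0 \<le> j") auto
  qed
  have "prob_ball p n mu e = measure_pmf.prob ?M (?E \<inter> set_pmf ?M)"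
    by (simp add: prob_ball_def measure_Int_set_pmf)
  also have "\<dots> \<le> measure_pmf.prob ?M (?A \<union> ?B)"
    by (rule measure_pmf.finite_measure_mono[OF sub]) simp
  also have "\<dots> \<le> measure_pmf.prob ?M ?A + measure_pmf.prob ?M ?B"
    by (rule measure_subadditive) (auto simp: measure_pmf.emeasure_eq_measure)
  finally show ?thesis .
qed

theorem proposition5p1:
  fixes p :: "int \<Rightarrow> real" and pm pp :: real and mu :: "zbar pmf"
  assumes "\<And>k. 0 < p k \<and> p k < 1"
    and "(p \<longlongrightarrow> pp) at_top" and "(p \<longlongrightarrow> pm) at_bot"
    and "0 < pm" and "pm < 1" and "0 < pp" and "pp < 1"
  shows "\<exists>L. ((\<lambda>\<epsilon>. limsup (\<lambda>n. ereal (1 / real n) * eln (prob_ball p n mu \<epsilon>)))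
              \<longlongrightarrow> L) (at_right 0)
          \<and> L \<le> - Irate p pm pp mu"
proof -
  note p = assms(1) and tp = assms(2) and tm = assms(3)
  note pm = assms(4,5) and pp = assms(6,7)
  define f where "f e = limsup (\<lambda>n. ereal (1 / real n) * eln (prob_ball p n mu e))" for e
  have fmono: "f a \<le> f b" if "0 < a" "a \<le> b" for a b
    unfolding f_def
  proof (rule Limsup_mono[OF always_eventually], intro allI)
    fix n
    show "ereal (1 / real n) * eln (prob_ball p n mu a) \<le> ereal (1 / real n) * eln (prob_ball p n mu b)"
      by (rule ereal_mult_left_mono[OF eln_mono[OF prob_ball_mono[OF that(2)]]]) simp
  qed
  define L where "L = (INF e\<in>{0<..}. f e)"
  have lim: "(f \<longlongrightarrow> L) (at_right 0)" unfolding L_def by (rule mono_lim[OF fmono])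
  have Lf: "L \<le> f e" if "0 < e" for e unfolding L_def by (rule INF_lower) (use that in auto)
  have key: "L \<le> ereal (- M)" if M: "ereal M < Irate p pm pp mu" for M
  proof -
    define am where "am = pmf mu NegInf"
    define ap where "ap = pmf mu PosInf"
    have am0: "0 \<le> am" and ap0: "0 \<le> ap" by (auto simp: am_def ap_def)
    define sA where "sA = sqrt ((1 - pm) / pm)"
    define sB where "sB = sqrt ((1 - pp) / pp)"
    define lA where "lA = (if 1/2 \<le> pp then 1 else sB)"
    define lB where "lB = (if pm \<le> 1/2 then 1 else sA)"
    have sA0: "0 < sA" using pm by (simp add: sA_def)
    have sB0: "0 < sB" using pp by (simp add: sB_def)
    have lA1: "1 \<le> lA"
    proof (cases "1/2 \<le> pp")
      case False
      then have "1 \<le> (1 - pp) / pp" using pp by (simp add: field_simps)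
      then show ?thesis using False by (simp add: lA_def sB_def)
    qed (simp add: lA_def)
    have lB1: "lB \<le> 1"
    proof (cases "pm \<le> 1/2")
      case False
      then have "(1 - pm) / pm \<le> 1" using pm by (simp add: field_simps)
      then show ?thesis using False by (simp add: lB_def sA_def)
    qed (simp add: lB_def)
    have lA0: "0 < lA" using lA1 by simp
    have lB0: "0 < lB" using sA0 by (simp add: lB_def)
    have ICA: "\<exists>x\<in>{0..1}. ICr pp x = ereal (Vt pp lA)"
    proof (cases "1/2 \<le> pp")
      case True
      then show ?thesis using ICr_min[OF pp] pp by (intro bexI[of _ "2 * pp - 1"]) (auto simp: lA_def)
    next
      case False
      then show ?thesis using ICr_zero[OF pp] by (intro bexI[of _ 0]) (auto simp: lA_def sB_def)
    qed
    have ICB: "\<exists>x\<in>{-1..0}. ICr pm x = ereal (Vt pm lB)"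
    proof (cases "pm \<le> 1/2")
      case True
      then show ?thesis using ICr_min[OF pm] pm by (intro bexI[of _ "2 * pm - 1"]) (auto simp: lB_def)
    next
      case False
      then show ?thesis using ICr_zero[OF pm] by (intro bexI[of _ 0]) (auto simp: lB_def sA_def)
    qed
    define Aval where "Aval = am * Vt pm sA + ap * Vt pp lA"
    define Bval where "Bval = am * Vt pm lB + ap * Vt pp sB"
    have Ale: "ereal am * ICr pm 0 + ereal ap * (INF x\<in>{0..1}. ICr pp x) \<le> ereal Aval"
    proof -
      obtain x where x: "x \<in> {0..1}" "ICr pp x = ereal (Vt pp lA)" using ICA by blast
      have "(INF x\<in>{0..1}. ICr pp x) \<le> ereal (Vt pp lA)" using x by (metis INF_lower)
      then have "ereal ap * (INF x\<in>{0..1}. ICr pp x) \<le> ereal ap * ereal (Vt pp lA)"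
        by (rule ereal_mult_left_mono) (simp add: ap0)
      then have h: "ereal ap * (INF x\<in>{0..1}. ICr pp x) \<le> ereal (ap * Vt pp lA)" by simp
      have e1: "ereal am * ICr pm 0 = ereal (am * Vt pm sA)" using ICr_zero[OF pm] by (simp add: sA_def)
      have "ereal am * ICr pm 0 + ereal ap * (INF x\<in>{0..1}. ICr pp x) \<le> ereal (am * Vt pm sA) + ereal (ap * Vt pp lA)"
        unfolding e1 by (rule add_left_mono[OF h])
      then show ?thesis by (simp add: Aval_def)
    qed
    have Ble: "ereal ap * ICr pp 0 + ereal am * (INF x\<in>{-1..0}. ICr pm x) \<le> ereal Bval"
    proof -
      obtain x where x: "x \<in> {-1..0}" "ICr pm x = ereal (Vt pm lB)" using ICB by blast
      have "(INF x\<in>{-1..0}. ICr pm x) \<le> ereal (Vt pm lB)" using x by (metis INF_lower)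
      then have "ereal am * (INF x\<in>{-1..0}. ICr pm x) \<le> ereal am * ereal (Vt pm lB)"
        by (rule ereal_mult_left_mono) (simp add: am0)
      then have h: "ereal am * (INF x\<in>{-1..0}. ICr pm x) \<le> ereal (am * Vt pm lB)" by simp
      have e1: "ereal ap * ICr pp 0 = ereal (ap * Vt pp sB)" using ICr_zero[OF pp] by (simp add: sB_def)
      have "ereal ap * ICr pp 0 + ereal am * (INF x\<in>{-1..0}. ICr pm x) \<le> ereal (ap * Vt pp sB) + ereal (am * Vt pm lB)"
        unfolding e1 by (rule add_left_mono[OF h])
      then show ?thesis by (simp add: Bval_def add.commute)
    qed
    define X where "X = ereal (1 - am - ap) * IDV p (\<lambda>k. pmf mu (Fin k) / (1 - am - ap))"
    have IX: "Irate p pm pp mu \<le> X + min (ereal Aval) (ereal Bval)"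
      unfolding Irate_def Let_def X_def am_def[symmetric] ap_def[symmetric]
      by (intro add_left_mono min.mono Ale Ble)
    define mn where "mn = min Aval Bval"
    have mnA: "mn \<le> Aval" unfolding mn_def by (rule min.cobounded1)
    have mnB: "mn \<le> Bval" unfolding mn_def by (rule min.cobounded2)
    have mm: "min (ereal Aval) (ereal Bval) = ereal mn" unfolding mn_def by (rule ereal_min[symmetric])
    have "ereal M < X + ereal mn" using less_le_trans[OF M IX] unfolding mm .
    then have XD: "ereal (M - mn) < X" by (cases X) auto
    obtain u where uall: "(\<forall>k. 1 \<le> u k) \<and> (\<lambda>k. pmf mu (Fin k) * Vf p u k) summable_on UNIV
      \<and> M - mn < (\<Sum>\<^sub>\<infinity>k. pmf mu (Fin k) * Vf p u k)"
      using DV_exists[of "M - mn" mu p, OF XD[unfolded X_def am_def ap_def]] by (elim exE) (rule that)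
    have u: "\<And>k. 1 \<le> u k" using uall by blast
    have sm: "(\<lambda>k. pmf mu (Fin k) * Vf p u k) summable_on UNIV" using uall by (rule conjunct1[OF conjunct2])
    have Du: "M - mn < (\<Sum>\<^sub>\<infinity>k. pmf mu (Fin k) * Vf p u k)" using uall by (rule conjunct2[OF conjunct2])
    define Sinf where "Sinf = (\<Sum>\<^sub>\<infinity>k. pmf mu (Fin k) * Vf p u k)"
    have eta_bound: "L \<le> ereal (- M) + ereal (6 * eta)" if eta: "0 < eta" for eta
    proof -
      obtain UA WA CA where allUA: "(\<forall>k. 0 < UA k) \<and> (1 \<le> lA \<longrightarrow> (\<forall>k\<ge>0. 1 \<le> UA k)) \<and> (sA \<le> 1 \<longrightarrow> (\<forall>k<0. 1 \<le> UA k))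
     \<and> (\<forall>k. WA (Fin k) \<le> Vf p UA k) \<and> 0 < CA \<and> (\<forall>x. \<bar>WA x\<bar> \<le> CA) \<and> (\<forall>h k. \<bar>WA h - WA k\<bar> \<le> CA * zdist h k)
     \<and> Sinf + am * Vt pm sA + ap * Vt pp lA - 6 * eta \<le> measure_pmf.expectation mu WA"
        using GEN[OF p tp tm pm pp u sm sA0 lA0 eta, folded Sinf_def am_def ap_def] by (elim exE) (rule that)
      have UA: "\<forall>k. 0 < UA k" "1 \<le> lA \<longrightarrow> (\<forall>k\<ge>0. 1 \<le> UA k)" using allUA by simp_all
      have WA: "\<forall>k. WA (Fin k) \<le> Vf p UA k" "0 < CA" "\<forall>x. \<bar>WA x\<bar> \<le> CA" "\<forall>h k. \<bar>WA h - WA k\<bar> \<le> CA * zdist h k"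
        using allUA by simp_all
      have EA: "Sinf + am * Vt pm sA + ap * Vt pp lA - 6 * eta \<le> measure_pmf.expectation mu WA" using allUA by simp
      obtain UB WB CB where allUB: "(\<forall>k. 0 < UB k) \<and> (1 \<le> sB \<longrightarrow> (\<forall>k\<ge>0. 1 \<le> UB k)) \<and> (lB \<le> 1 \<longrightarrow> (\<forall>k<0. 1 \<le> UB k))
     \<and> (\<forall>k. WB (Fin k) \<le> Vf p UB k) \<and> 0 < CB \<and> (\<forall>x. \<bar>WB x\<bar> \<le> CB) \<and> (\<forall>h k. \<bar>WB h - WB k\<bar> \<le> CB * zdist h k)
     \<and> Sinf + am * Vt pm lB + ap * Vt pp sB - 6 * eta \<le> measure_pmf.expectation mu WB"
        using GEN[OF p tp tm pm pp u sm lB0 sB0 eta, folded Sinf_def am_def ap_def] by (elim exE) (rule that)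
      have UB: "\<forall>k. 0 < UB k" "lB \<le> 1 \<longrightarrow> (\<forall>k<0. 1 \<le> UB k)" using allUB by simp_all
      have WB: "\<forall>k. WB (Fin k) \<le> Vf p UB k" "0 < CB" "\<forall>x. \<bar>WB x\<bar> \<le> CB" "\<forall>h k. \<bar>WB h - WB k\<bar> \<le> CB * zdist h k"
        using allUB by simp_all
      have EB: "Sinf + am * Vt pm lB + ap * Vt pp sB - 6 * eta \<le> measure_pmf.expectation mu WB" using allUB by simp
      have EA': "M - 6 * eta \<le> measure_pmf.expectation mu WA"
        using EA Du mnA unfolding Sinf_def[symmetric] Aval_def by linarith
      have EB': "M - 6 * eta \<le> measure_pmf.expectation mu WB"
        using EB Du mnB unfolding Sinf_def[symmetric] Bval_def by linarith
      define C where "C = max CA CB"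
      have C0: "0 < C" using WA(2) by (simp add: C_def)
      define Kc where "Kc = UA 0 * exp CA + UB 0 * exp CB"
      have Kc0: "0 < Kc" using UA(1) UB(1) by (simp add: Kc_def add_pos_pos)
      have fe: "f e \<le> ereal (- (M - 6 * eta - C * e))" if e: "0 < e" for e
        unfolding f_def
      proof (rule limsup_bound[OF _ Kc0])
        fix n :: nat assume n: "1 \<le> n"
        define Z where "Z = exp (- (real n * (M - 6 * eta - C * e)))"
        have PA: "measure_pmf.prob (walk p (Fin 0) (n-1)) {xs. empirical xs \<in> BLball mu e \<and> (\<exists>k\<in>{k. 0 \<le> k}. last xs = Fin k)}
            \<le> UA 0 * (exp CA * exp (- (real n * (measure_pmf.expectation mu WA - CA * e))))"
        proof (rule PB[OF p])
          show "\<And>k. 0 < UA k" using UA(1) by blast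
          show "\<And>k. k \<in> {k. 0 \<le> k} \<Longrightarrow> 1 \<le> UA k" using UA(2) lA1 by blast
          show "\<And>k. WA (Fin k) \<le> Vf p UA k" using WA(1) by blast
          show "0 < CA" by (rule WA(2))
          show "\<And>x. \<bar>WA x\<bar> \<le> CA" using WA(3) by blast
          show "\<And>h k. \<bar>WA h - WA k\<bar> \<le> CA * zdist h k" using WA(4) by blast
          show "1 \<le> n" by (rule n)
        qed
        have PB': "measure_pmf.prob (walk p (Fin 0) (n-1)) {xs. empirical xs \<in> BLball mu e \<and> (\<exists>k\<in>{k. k < 0}. last xs = Fin k)}
            \<le> UB 0 * (exp CB * exp (- (real n * (measure_pmf.expectation mu WB - CB * e))))"
        proof (rule PB[OF p])
          show "\<And>k. 0 < UB k" using UB(1) by blast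
          show "\<And>k. k \<in> {k. k < 0} \<Longrightarrow> 1 \<le> UB k" using UB(2) lB1 by blast
          show "\<And>k. WB (Fin k) \<le> Vf p UB k" using WB(1) by blast
          show "0 < CB" by (rule WB(2))
          show "\<And>x. \<bar>WB x\<bar> \<le> CB" using WB(3) by blast
          show "\<And>h k. \<bar>WB h - WB k\<bar> \<le> CB * zdist h k" using WB(4) by blast
          show "1 \<le> n" by (rule n)
        qed
        have zA: "exp (- (real n * (measure_pmf.expectation mu WA - CA * e))) \<le> Z"
        proof -
          have "CA * e \<le> C * e" using e by (simp add: C_def mult_right_mono)
          then have "M - 6 * eta - C * e \<le> measure_pmf.expectation mu WA - CA * e" using EA' by linarith
          then have "real n * (M - 6 * eta - C * e) \<le> real n * (measure_pmf.expectation mu WA - CA * e)"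
            by (rule mult_left_mono) simp
          then show ?thesis by (simp add: Z_def)
        qed
        have zB: "exp (- (real n * (measure_pmf.expectation mu WB - CB * e))) \<le> Z"
        proof -
          have "CB * e \<le> C * e" using e by (simp add: C_def mult_right_mono)
          then have "M - 6 * eta - C * e \<le> measure_pmf.expectation mu WB - CB * e" using EB' by linarith
          then have "real n * (M - 6 * eta - C * e) \<le> real n * (measure_pmf.expectation mu WB - CB * e)"
            by (rule mult_left_mono) simp
          then show ?thesis by (simp add: Z_def)
        qed
        have "UA 0 * (exp CA * exp (- (real n * (measure_pmf.expectation mu WA - CA * e)))) \<le> UA 0 * (exp CA * Z)"
          using zA UA(1) less_imp_le[OF spec[OF UA(1), of 0]] by (intro mult_left_mono) auto
        moreover have "UB 0 * (exp CB * exp (- (real n * (measure_pmf.expectation mu WB - CB * e)))) \<le> UB 0 * (exp CB * Z)"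
          using zB UB(1) less_imp_le[OF spec[OF UB(1), of 0]] by (intro mult_left_mono) auto
        ultimately have "prob_ball p n mu e \<le> UA 0 * (exp CA * Z) + UB 0 * (exp CB * Z)"
          using split_bound[of p n mu e] PA PB' by linarith
        moreover have "UA 0 * (exp CA * Z) + UB 0 * (exp CB * Z) = Kc * Z"
          by (simp add: Kc_def distrib_right mult.assoc)
        ultimately show "prob_ball p n mu e \<le> Kc * exp (- (real n * (M - 6 * eta - C * e)))"
          by (simp add: Z_def)
      qed
      have "L \<le> ereal (- (M - 6 * eta))"
      proof (rule ereal_le_epsilon2)
        fix d :: real assume d: "0 < d"
        have "L \<le> f (d / C)" using d C0 by (intro Lf) simp
        also have "\<dots> \<le> ereal (- (M - 6 * eta - C * (d / C)))" using d C0 by (intro fe) simp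
        also have "\<dots> = ereal (- (M - 6 * eta)) + ereal d" using C0 by simp
        finally show "L \<le> ereal (- (M - 6 * eta)) + ereal d" .
      qed
      then show ?thesis by simp
    qed
    show ?thesis
    proof (rule ereal_le_epsilon2)
      fix d :: real assume d: "0 < d"
      have "L \<le> ereal (- M) + ereal (6 * (d / 6))" using d by (intro eta_bound) simp
      then show "L \<le> ereal (- M) + ereal d" by simp
    qed
  qed
  have LI: "L \<le> - Irate p pm pp mu"
  proof (rule ccontr)
    assume "\<not> L \<le> - Irate p pm pp mu"
    then have "- Irate p pm pp mu < L" by simp
    then have "- L < Irate p pm pp mu" by (simp add: ereal_uminus_less_reorder)
    then obtain M where M1: "- L < ereal M" and M2: "ereal M < Irate p pm pp mu"
      using ereal_dense2 by blast
    have "L \<le> ereal (- M)" by (rule key[OF M2])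
    moreover have "ereal (- M) < L" using M1 ereal_uminus_less_reorder[of L "ereal M"] by simp
    ultimately show False by simp
  qed
  have "((\<lambda>\<epsilon>. limsup (\<lambda>n. ereal (1 / real n) * eln (prob_ball p n mu \<epsilon>))) \<longlongrightarrow> L) (at_right 0)"
    using lim by (simp add: f_def[abs_def])
  then show ?thesis using LI by blast
qed

end
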